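(* Let $k\geq2$ and let $L=(l_1,\dots,l_k)$ be generic positive integers with sum $n$. Let $X=(u,v)$ be an oriented 1-simplex of $Tonn^{n,k}(L)$ with $L$-type $I\subseteq[k]$. Then $X$ is homotopic relative to its end-points to an edge-path $Y_1Y_2\cdots Y_t$ consisting of $\oplus$-atomic oriented 1-simplices, where $t=|I|$ and the types of $Y_1,\dots,Y_t$ are pairwise distinct and together form exactly the set $I$.
   Context: The generalized tonnetz $Tonn^{n,k}(L)$ is the simplicial complex on vertex set $\mathbb{Z}_n$ whose maximal simplices are $\Delta(x;\sigma)=\{x,\,x+l_{\sigma(1)},\dots,x+l_{\sigma(1)}+\dots+l_{\sigma(k-1)}\}$ for $x\in\mathbb{Z}_n$, $\sigma\in S_k$. $L$ is generic if for all $I,J\subseteq[k]$, $\sum_{i\in I}l_i=\sum_{j\in J}l_j$ implies $I=J$. For an oriented 1-simplex $X=(u,v)$, its $L$-type is the unique nonempty $I\subseteq[k]$ with $v-u\equiv\sum_{j\in I}l_j\pmod n$, where $v-u$ is taken in $\{1,\dots,n-1\}$ (it exists since $\{u,v\}$ lies in some $\Delta(x;\sigma)$, and is unique by genericity). $X$ is $\oplus$-atomic of type $i$ if $v=u+l_i$ in $\mathbb{Z}_n$. Edge-paths are sequences of oriented 1-simplices with matching end-points; two edge-paths with the same end-points are homotopic (rel end-points) if one is obtained from the other by finitely many elementary moves: replacing an edge $(a,c)$ by $(a,b)(b,c)$ where $\{a,b,c\}$ is a simplex, or the reverse (including insertion/deletion of backtracks $(a,b)(b,a)$). *)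

theory Defs
  imports "HOL-Combinatorics.Permutations"
begin

text \<open>Generalized tonnetz Tonn^{n,k}(L). Vertices are the integers 0..n-1 (representing Z_n);
  L = (l 1, ..., l k) is given as a function on indices 1..k.\<close>

definition tonn_Delta :: "int \<Rightarrow> nat \<Rightarrow> (nat \<Rightarrow> int) \<Rightarrow> int \<Rightarrow> (nat \<Rightarrow> nat) \<Rightarrow> int set" where
  "tonn_Delta n k l x \<sigma> = {(x + (\<Sum>j\<in>{1..i}. l (\<sigma> j))) mod n | i. i < k}"

definition tonn_simplex :: "int \<Rightarrow> nat \<Rightarrow> (nat \<Rightarrow> int) \<Rightarrow> int set \<Rightarrow> bool" where
  "tonn_simplex n k l S \<longleftrightarrow> S \<noteq> {} \<and>
     (\<exists>x \<sigma>. x \<in> {0..<n} \<and> \<sigma> permutes {1..k} \<and> S \<subseteq> tonn_Delta n k l x \<sigma>)"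

definition generic :: "nat \<Rightarrow> (nat \<Rightarrow> int) \<Rightarrow> bool" where
  "generic k l \<longleftrightarrow> (\<forall>I J. I \<subseteq> {1..k} \<longrightarrow> J \<subseteq> {1..k} \<longrightarrow> sum l I = sum l J \<longrightarrow> I = J)"

definition oriented_edge :: "int \<Rightarrow> nat \<Rightarrow> (nat \<Rightarrow> int) \<Rightarrow> int \<times> int \<Rightarrow> bool" where
  "oriented_edge n k l e \<longleftrightarrow> fst e \<in> {0..<n} \<and> snd e \<in> {0..<n} \<and> fst e \<noteq> snd e
      \<and> tonn_simplex n k l {fst e, snd e}"

definition L_type :: "int \<Rightarrow> nat \<Rightarrow> (nat \<Rightarrow> int) \<Rightarrow> int \<times> int \<Rightarrow> nat set \<Rightarrow> bool" where
  "L_type n k l e I \<longleftrightarrow> I \<noteq> {} \<and> I \<subseteq> {1..k} \<and> (snd e - fst e) mod n = (sum l I) mod n"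

definition atomic :: "int \<Rightarrow> nat \<Rightarrow> (nat \<Rightarrow> int) \<Rightarrow> int \<times> int \<Rightarrow> nat \<Rightarrow> bool" where
  "atomic n k l e i \<longleftrightarrow> oriented_edge n k l e \<and> i \<in> {1..k} \<and> snd e = (fst e + l i) mod n"

fun edge_path :: "int \<Rightarrow> nat \<Rightarrow> (nat \<Rightarrow> int) \<Rightarrow> int \<Rightarrow> (int \<times> int) list \<Rightarrow> int \<Rightarrow> bool" where
  "edge_path n k l a [] b \<longleftrightarrow> a = b"
| "edge_path n k l a (e # es) b \<longleftrightarrow> fst e = a \<and> oriented_edge n k l e \<and> edge_path n k l (snd e) es b"

definition elem_move :: "int \<Rightarrow> nat \<Rightarrow> (nat \<Rightarrow> int) \<Rightarrow> (int \<times> int) list \<Rightarrow> (int \<times> int) list \<Rightarrow> bool" where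
  "elem_move n k l p q \<longleftrightarrow>
     (\<exists>xs ys a b c. p = xs @ [(a,c)] @ ys \<and> q = xs @ [(a,b),(b,c)] @ ys \<and> tonn_simplex n k l {a,b,c})
   \<or> (\<exists>xs ys a b. p = xs @ ys \<and> q = xs @ [(a,b),(b,a)] @ ys \<and> tonn_simplex n k l {a,b})"

definition homotopic_rel :: "int \<Rightarrow> nat \<Rightarrow> (nat \<Rightarrow> int) \<Rightarrow> int \<Rightarrow> int \<Rightarrow> (int \<times> int) list \<Rightarrow> (int \<times> int) list \<Rightarrow> bool" where
  "homotopic_rel n k l u v p q \<longleftrightarrow>
     (\<lambda>p q. edge_path n k l u p v \<and> edge_path n k l u q v \<and> (elem_move n k l p q \<or> elem_move n k l q p))\<^sup>*\<^sup>* p q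
     \<and> edge_path n k l u p v \<and> edge_path n k l u q v"

end

theory Submission
  imports Defs
begin
lemma perm_exists:
  fixes I :: "nat set"
  assumes "I \<subseteq> {1..k}"
  shows "\<exists>\<tau>. \<tau> permutes {1..k} \<and> \<tau> ` {1..card I} = I"
proof -
  define t where "t = card I"
  have fI: "finite I" using assms finite_subset by blast
  have tk: "t \<le> k" unfolding t_def using card_mono[OF _ assms] by simp
  obtain f where f: "bij_betw f {0..<t} I" using ex_bij_betw_nat_finite[OF fI] t_def by auto
  have cJ: "card ({1..k} - I) = k - t" unfolding t_def using card_Diff_subset[OF fI assms] by simp
  obtain g where g: "bij_betw g {0..<k-t} ({1..k} - I)"
    using ex_bij_betw_nat_finite[of "{1..k} - I"] cJ by auto
  define \<tau> where "\<tau> j = (if j \<in> {1..t} then f (j-1) else if j \<in> {t+1..k} then g (j-t-1) else j)" for j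
  have i1: "\<tau> ` {1..t} = I"
  proof -
    have "\<tau> ` {1..t} = (\<lambda>j. f (j-1)) ` {1..t}" unfolding \<tau>_def by auto
    also have "\<dots> = f ` ((\<lambda>j. j - 1) ` {1..t})" by (simp add: image_image)
    also have "(\<lambda>j. j - 1) ` {1..t} = {0..<t}"
      by (auto simp: image_iff intro!: bexI[where x="Suc _"])
    finally show ?thesis using f bij_betw_imp_surj_on by metis
  qed
  have i2: "\<tau> ` {t+1..k} = {1..k} - I"
  proof -
    have "\<tau> ` {t+1..k} = (\<lambda>j. g (j-t-1)) ` {t+1..k}" unfolding \<tau>_def by auto
    also have "\<dots> = g ` ((\<lambda>j. j - t - 1) ` {t+1..k})" by (simp add: image_image)
    also have "(\<lambda>j. j - t - 1) ` {t+1..k} = {0..<k-t}"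
      by (auto simp: image_iff intro!: bexI[where x="_ + t + 1"])
    finally show ?thesis using g bij_betw_imp_surj_on by metis
  qed
  have sp: "{1..k} = {1..t} \<union> {t+1..k}" using tk by auto
  have im: "\<tau> ` {1..k} = {1..k}" using i1 i2 assms sp by (metis Un_Diff_cancel image_Un sup.absorb2)
  have "inj_on \<tau> {1..k}" by (metis eq_card_imp_inj_on finite_atLeastAtMost im)
  then have "bij_betw \<tau> {1..k} {1..k}" using im by (simp add: bij_betw_def)
  moreover have "\<And>x. x \<notin> {1..k} \<Longrightarrow> \<tau> x = x" unfolding \<tau>_def using tk by auto
  ultimately have "\<tau> permutes {1..k}" by (rule bij_imp_permutes)
  then show ?thesis using i1 t_def by auto
qed
lemma edge_path_append:
  "edge_path n k l a (xs @ ys) b \<longleftrightarrow> (\<exists>c. edge_path n k l a xs c \<and> edge_path n k l c ys b)"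
  by (induction xs arbitrary: a) auto

theorem lemma2p7:
  fixes n :: int and k :: nat and l :: "nat \<Rightarrow> int" and u v :: int and I :: "nat set"
  assumes "k \<ge> 2"
    and "\<forall>i\<in>{1..k}. l i > 0"
    and "generic k l"
    and "n = (\<Sum>i\<in>{1..k}. l i)"
    and "oriented_edge n k l (u, v)"
    and "L_type n k l (u, v) I"
  shows "\<exists>Ys ty. homotopic_rel n k l u v [(u, v)] Ys \<and> length Ys = card I
           \<and> (\<forall>j < length Ys. atomic n k l (Ys ! j) (ty j))
           \<and> inj_on ty {..<length Ys} \<and> ty ` {..<length Ys} = I"
proof -
  note pos = assms(2) and ndef = assms(4)
  have uv: "u \<in> {0..<n}" "v \<in> {0..<n}" "u \<noteq> v" using assms(5) unfolding oriented_edge_def by auto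
  have I: "I \<noteq> {}" "I \<subseteq> {1..k}" "(v - u) mod n = sum l I mod n"
    using assms(6) unfolding L_type_def by auto
  have npos: "n > 0" using uv by auto
  define t where "t = card I"
  have fI: "finite I" using I(2) finite_subset by blast
  have t1: "t \<ge> 1" using I(1) fI t_def by (simp add: Suc_leI card_gt_0_iff)
  have "I \<noteq> {1..k}"
  proof
    assume "I = {1..k}"
    then have "(v - u) mod n = 0" using I(3) ndef by simp
    moreover have "v - u > -n" "v - u < n" using uv by auto
    ultimately have "v - u = 0"
      by (smt (verit, best) mod_minus_minus mod_neg_neg_trivial zmod_zminus2_eq_if)
    then show False using uv(3) by simp
  qed
  then have tk: "t < k" unfolding t_def using I(2)
    by (metis card_atLeastAtMost card_subset_eq diff_Suc_1 finite_atLeastAtMost le_neq_implies_less card_mono)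
  obtain \<tau> where \<tau>: "\<tau> permutes {1..k}" "\<tau> ` {1..t} = I" using perm_exists[OF I(2)] t_def by auto
  define S where "S i = (\<Sum>j\<in>{1..i}. l (\<tau> j))" for i
  define w where "w i = (u + S i) mod n" for i
  define E where "E j = (w j, w (Suc j))" for j
  have w0: "w 0 = u" unfolding w_def S_def using uv by simp
  have injt: "inj_on \<tau> {1..t}" using \<tau>(1) permutes_inj_on inj_on_subset tk
    by (metis atLeastatMost_subset_iff le_refl less_imp_le)
  have "S t = sum l I" unfolding S_def using sum.reindex[OF injt, of l] \<tau>(2) by simp
  then have wt: "w t = v" unfolding w_def using I(3) uv
    by (metis add.commute diff_add_cancel mod_add_right_eq mod_pos_pos_trivial atLeastLessThan_iff)
  have wr: "w i \<in> {0..<n}" for i unfolding w_def using npos by simp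
  have Sn: "(\<Sum>j\<in>{1..k}. l (\<tau> j)) = n"
    using sum.permute[OF \<tau>(1), of l] ndef by (simp add: comp_def)
  have wd: "w i \<noteq> w j" if "i < j" "j \<le> t" for i j
  proof
    assume "w i = w j"
    then have dv: "(S j - S i) mod n = 0" unfolding w_def by (metis mod_diff_cong diff_add_cancel add_diff_cancel_left' diff_self mod_0)
    have "{1..j} = {1..i} \<union> {Suc i..j}" using that by auto
    then have "S j = S i + (\<Sum>m\<in>{Suc i..j}. l (\<tau> m))" unfolding S_def
      by (simp add: sum.union_disjoint[symmetric])
    then have D: "S j - S i = (\<Sum>m\<in>{Suc i..j}. l (\<tau> m))" by simp
    have tin: "\<tau> m \<in> {1..k}" if "m \<in> {1..k}" for m using \<tau>(1) that by (metis permutes_in_image)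
    have p1: "(\<Sum>m\<in>{Suc i..j}. l (\<tau> m)) > 0"
      apply (rule sum_pos) using that tk tin pos by auto
    have sub: "{Suc i..j} \<subseteq> {1..k}" using that tk by auto
    have "n = (\<Sum>m\<in>{Suc i..j}. l (\<tau> m)) + (\<Sum>m\<in>{1..k} - {Suc i..j}. l (\<tau> m))"
      using Sn sum.subset_diff[OF sub, of "\<lambda>m. l (\<tau> m)"] by simp
    moreover have "(\<Sum>m\<in>{1..k} - {Suc i..j}. l (\<tau> m)) \<ge> l (\<tau> k)"
      apply (rule member_le_sum) using that tk tin pos by (auto simp: less_imp_le)
    moreover have "l (\<tau> k) > 0" using tin pos tk by auto
    ultimately have "(\<Sum>m\<in>{Suc i..j}. l (\<tau> m)) < n" by linarith
    then show False using dv D p1 by (simp add: mod_pos_pos_trivial)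
  qed
  have wsimp: "tonn_simplex n k l A" if "A \<subseteq> w ` {..t}" "A \<noteq> {}" for A
  proof -
    have "w ` {..t} \<subseteq> tonn_Delta n k l u \<tau>"
      unfolding tonn_Delta_def w_def S_def using tk by auto
    then show ?thesis unfolding tonn_simplex_def using that uv \<tau>(1) by blast
  qed
  have oe: "oriented_edge n k l (w i, w j)" if "i \<noteq> j" "i \<le> t" "j \<le> t" for i j
  proof -
    have "w i \<noteq> w j" using wd that by (metis linorder_neqE_nat)
    then show ?thesis unfolding oriented_edge_def using wr that by (auto intro!: wsimp)
  qed
  have ep: "edge_path n k l (w i) (map E [i..<m]) (w m)" if "i \<le> m" "m \<le> t" for i m
    using that
  proof (induction m)
    case 0 then show ?case by simp
  next
    case (Suc m)
    show ?case
    proof (cases "i = Suc m")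
      case True then show ?thesis by simp
    next
      case False
      then have "i \<le> m" using Suc by simp
      then have "edge_path n k l (w i) (map E [i..<m]) (w m)" using Suc by simp
      moreover have "edge_path n k l (w m) [E m] (w (Suc m))" using oe[of m "Suc m"] Suc E_def by simp
      ultimately show ?thesis using \<open>i \<le> m\<close> edge_path_append by auto
    qed
  qed
  define P where "P m = map E [0..<m] @ [(w m, w t)]" for m
  have Pe: "edge_path n k l u (P m) v" if "m < t" for m
    unfolding P_def using ep[of 0 m] w0 wt oe[of m t] that edge_path_append by auto
  define R where "R = (\<lambda>p q. edge_path n k l u p v \<and> edge_path n k l u q v \<and> (elem_move n k l p q \<or> elem_move n k l q p))"
  have chain: "R\<^sup>*\<^sup>* (P 0) (P m)" if "m < t" for m
    using that
  proof (induction m)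
    case 0 then show ?case by simp
  next
    case (Suc m)
    have "elem_move n k l (P m) (P (Suc m))"
      unfolding elem_move_def
    proof (intro disjI1 exI conjI)
      show "P m = map E [0..<m] @ [(w m, w t)] @ []" unfolding P_def by simp
      show "P (Suc m) = map E [0..<m] @ [(w m, w (Suc m)), (w (Suc m), w t)] @ []"
        unfolding P_def E_def by simp
      show "tonn_simplex n k l {w m, w (Suc m), w t}" using Suc by (intro wsimp) auto
    qed
    then have "R (P m) (P (Suc m))" unfolding R_def using Pe Suc by auto
    then show ?case using Suc by (meson rtranclp.rtrancl_into_rtrancl Suc_lessD)
  qed
  have P0: "P 0 = [(u, v)]" unfolding P_def using w0 wt by simp
  have Pt: "P (t - 1) = map E [0..<t]" unfolding P_def E_def using t1
    by (metis (no_types, lifting) One_nat_def Suc_diff_1 le_imp_less_Suc less_one list.simps(8,9)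
        map_append not_less_eq upt_Suc zero_less_one le_eq_less_or_eq)
  define Ys where "Ys = map E [0..<t]"
  define ty where "ty j = \<tau> (Suc j)" for j
  have hom: "homotopic_rel n k l u v [(u, v)] Ys"
    unfolding homotopic_rel_def using chain[of "t - 1"] Pe[of 0] Pe[of "t-1"] t1 P0 Pt Ys_def R_def by auto
  have at: "atomic n k l (Ys ! j) (ty j)" if "j < length Ys" for j
  proof -
    have j: "j < t" using that Ys_def by simp
    have "Ys ! j = (w j, w (Suc j))" using j Ys_def E_def by simp
    moreover have "\<tau> (Suc j) \<in> {1..k}" using \<tau>(1) j tk permutes_in_image[OF \<tau>(1), of "Suc j"] by auto
    moreover have "w (Suc j) = (w j + l (\<tau> (Suc j))) mod n" unfolding w_def S_def
      by (simp add: mod_add_left_eq add.assoc)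
    ultimately show ?thesis unfolding atomic_def ty_def using oe[of j "Suc j"] j by auto
  qed
  have im: "(\<lambda>j. Suc j) ` {..<t} = {1..t}" using image_Suc_lessThan by simp
  have lY: "length Ys = t" unfolding Ys_def by simp
  have inj: "inj_on ty {..<length Ys}" unfolding lY
  proof (rule inj_onI)
    fix x y assume xy: "x \<in> {..<t}" "y \<in> {..<t}" "ty x = ty y"
    have "Suc x \<in> {1..t}" "Suc y \<in> {1..t}" using xy by auto
    then have "Suc x = Suc y" using inj_onD[OF injt] xy(3) unfolding ty_def by blast
    then show "x = y" by simp
  qed
  have ran: "ty ` {..<length Ys} = I" unfolding lY
  proof -
    have "ty ` {..<t} = \<tau> ` (Suc ` {..<t})" unfolding ty_def by (simp add: image_image)
    then show "ty ` {..<t} = I" using im \<tau>(2) by simp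
  qed
  show ?thesis using hom at inj ran Ys_def t_def by (intro exI[of _ Ys] exI[of _ ty]) auto
qed
end
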